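(* Let $G$ be a finite group and $H$ a subgroup such that $\mathcal{O}_G(H)$ is Boolean of rank $\ell$, with atoms $A_1,\ldots,A_\ell$. If $|A_i:H|\ge2^i$ for each $i\in\{1,\ldots,\ell\}$, then $\hat\varphi(H,G)\ge2^{\ell-1}$.
   Context: $\mathcal{O}_G(H)=\{K\mid H\le K\le G\}$; Boolean of rank $\ell$ means isomorphic to the lattice of subsets of an $\ell$-set; atoms are the minimal elements of $\mathcal{O}_G(H)\setminus\{H\}$. The dual Euler totient is $\hat\varphi(H,G)=\sum_{K\in\mathcal{O}_G(H)}\mu(H,K)|G:K|$ where $\mu$ is the Möbius function of $\mathcal{O}_G(H)$. *)

theory Defs
  imports Complex_Main "HOL-Algebra.Coset"
begin

definition overgroups :: "('a, 'b) monoid_scheme \<Rightarrow> 'a set \<Rightarrow> 'a set set" where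
  "overgroups G H = {K. subgroup K G \<and> H \<subseteq> K}"

definition rel_index :: "('a, 'b) monoid_scheme \<Rightarrow> 'a set \<Rightarrow> 'a set \<Rightarrow> nat" where
  "rel_index G K H = card ((\<lambda>a. H #>\<^bsub>G\<^esub> a) ` K)"

definition boolean_rank :: "'a set set \<Rightarrow> nat \<Rightarrow> bool" where
  "boolean_rank P l \<longleftrightarrow> (\<exists>f. bij_betw f P (Pow {..<l}) \<and>
      (\<forall>K\<in>P. \<forall>L\<in>P. K \<subseteq> L \<longleftrightarrow> f K \<subseteq> f L))"

definition atoms :: "('a, 'b) monoid_scheme \<Rightarrow> 'a set \<Rightarrow> 'a set set" where
  "atoms G H = {A \<in> overgroups G H - {H}. \<forall>B \<in> overgroups G H - {H}. B \<subseteq> A \<longrightarrow> B = A}"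

text \<open>The recursion is unfolded with fuel card P, which exceeds the length of every strict chain.\<close>
fun mobius_aux :: "nat \<Rightarrow> 'a set \<Rightarrow> ('a \<Rightarrow> 'a \<Rightarrow> bool) \<Rightarrow> 'a \<Rightarrow> 'a \<Rightarrow> int" where
  "mobius_aux 0 P leq x y = (if x = y then 1 else 0)"
| "mobius_aux (Suc n) P leq x y =
     (if x = y then 1
      else if leq x y then - (\<Sum>z\<in>{z\<in>P. leq x z \<and> leq z y \<and> z \<noteq> y}. mobius_aux n P leq x z)
      else 0)"

definition mobius :: "'a set \<Rightarrow> ('a \<Rightarrow> 'a \<Rightarrow> bool) \<Rightarrow> 'a \<Rightarrow> 'a \<Rightarrow> int" where
  "mobius P leq x y = mobius_aux (card P) P leq x y"

definition dual_totient :: "('a, 'b) monoid_scheme \<Rightarrow> 'a set \<Rightarrow> int" where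
  "dual_totient G H = (\<Sum>K\<in>overgroups G H.
      mobius (overgroups G H) (\<subseteq>) H K * int (rel_index G (carrier G) K))"

end

theory Submission
  imports Defs
begin


lemma rel_index_lagrange:
  assumes "group G" "finite (carrier G)" "subgroup H G" "subgroup K G" "H \<subseteq> K"
  shows "rel_index G K H * card H = card K"
proof -
  interpret group G by fact
  let ?K = "G\<lparr>carrier := K\<rparr>"
  have gK: "group ?K" using subgroup.subgroup_is_group[OF assms(4) assms(1)] .
  have sH: "subgroup H ?K" using subgroup_incl assms by blast
  have "card (rcosets\<^bsub>?K\<^esub> H) * card H = order ?K"
    using group.lagrange[OF gK sH] .
  moreover have "rcosets\<^bsub>?K\<^esub> H = (\<lambda>a. H #>\<^bsub>G\<^esub> a) ` K"
    unfolding RCOSETS_def r_coset_def by auto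
  ultimately show ?thesis unfolding rel_index_def order_def by simp
qed

lemma (in group) rcoset_inter:
  assumes "subgroup A G" "subgroup K G" "a \<in> A"
  shows "(K #>\<^bsub>G\<^esub> a) \<inter> A = (A \<inter> K) #>\<^bsub>G\<^esub> a"
proof -
  have aG: "a \<in> carrier G" using subgroup.mem_carrier[OF assms(1) assms(3)] .
  show ?thesis
  proof
    show "(K #>\<^bsub>G\<^esub> a) \<inter> A \<subseteq> (A \<inter> K) #>\<^bsub>G\<^esub> a"
    proof
      fix x assume x: "x \<in> (K #>\<^bsub>G\<^esub> a) \<inter> A"
      then have xA: "x \<in> A" by blast
      from x obtain h where h: "h \<in> K" "x = h \<otimes> a" unfolding r_coset_def by auto
      have hG: "h \<in> carrier G" using subgroup.mem_carrier[OF assms(2) h(1)] .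
      have "x \<otimes> inv a = h" using hG aG by (simp add: h(2) m_assoc)
      moreover have "x \<otimes> inv a \<in> A"
        by (rule subgroup.m_closed[OF assms(1) xA subgroup.m_inv_closed[OF assms(1) assms(3)]])
      ultimately have "h \<in> A" by simp
      then have "h \<in> A \<inter> K" using h(1) by blast
      then show "x \<in> (A \<inter> K) #>\<^bsub>G\<^esub> a" using h(2) unfolding r_coset_def by blast
    qed
    show "(A \<inter> K) #>\<^bsub>G\<^esub> a \<subseteq> (K #>\<^bsub>G\<^esub> a) \<inter> A"
    proof
      fix x assume "x \<in> (A \<inter> K) #>\<^bsub>G\<^esub> a"
      then obtain h where h: "h \<in> A" "h \<in> K" "x = h \<otimes> a" unfolding r_coset_def by auto
      have "x \<in> A" unfolding h(3) by (rule subgroup.m_closed[OF assms(1) h(1) assms(3)])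
      moreover have "x \<in> K #>\<^bsub>G\<^esub> a" using h(2,3) unfolding r_coset_def by blast
      ultimately show "x \<in> (K #>\<^bsub>G\<^esub> a) \<inter> A" by blast
    qed
  qed
qed

lemma rel_index_mono:
  assumes "group G" "finite (carrier G)" "subgroup A G" "subgroup K G" "subgroup L G"
    "A \<subseteq> L" "K \<subseteq> L" "A \<inter> K = H"
  shows "rel_index G A H \<le> rel_index G L K"
proof -
  have "(\<lambda>a. H #>\<^bsub>G\<^esub> a) ` A = (\<lambda>C. C \<inter> A) ` ((\<lambda>a. K #>\<^bsub>G\<^esub> a) ` A)"
    using group.rcoset_inter[OF assms(1,3,4)] assms(8) by (auto simp: image_image)
  moreover have finA: "finite A" using finite_subset[OF subgroup.subset[OF assms(3)] assms(2)] .
  ultimately have "rel_index G A H \<le> card ((\<lambda>a. K #>\<^bsub>G\<^esub> a) ` A)"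
    unfolding rel_index_def using card_image_le[OF finite_imageI[OF finA]] by simp
  also have "\<dots> \<le> rel_index G L K"
    unfolding rel_index_def
    by (rule card_mono) (use assms(2,5,6) subgroup.subset[OF assms(5)] finite_subset in \<open>auto intro!: finite_imageI\<close>)
  finally show ?thesis .
qed



lemma altsum_zero:
  assumes "finite S" "S \<noteq> {}"
  shows "(\<Sum>T\<in>Pow S. (-1::int) ^ card T) = 0"
proof (rule sum_alternating_cancels)
  show "finite (Pow S)" using assms by simp
  have "{} \<subset> S" using assms by auto
  from card_subsupersets_even_odd[OF assms(1) this]
  show "card {x \<in> Pow S. even (card x)} = card {x \<in> Pow S. odd (card x)}" by simp
qed

lemma abstract_bound:
  "\<forall>f::nat set \<Rightarrow> real. (\<forall>S\<subseteq>{1..k}. 0 \<le> f S) \<longrightarrow>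
     (\<forall>S\<subseteq>{1..k}. \<forall>i\<in>{1..k}. i \<notin> S \<longrightarrow> 2^i * f (insert i S) \<le> f S) \<longrightarrow>
     f {} / 2^k \<le> (\<Sum>S\<in>Pow {1..k}. (-1)^card S * f S) \<and>
     (\<Sum>S\<in>Pow {1..k}. (-1)^card S * f S) \<le> f {}"
proof (induction k)
  case 0
  then show ?case by simp
next
  case (Suc k)
  show ?case
  proof (intro allI impI)
    fix f :: "nat set \<Rightarrow> real"
    assume nn: "\<forall>S\<subseteq>{1..Suc k}. 0 \<le> f S"
      and st: "\<forall>S\<subseteq>{1..Suc k}. \<forall>i\<in>{1..Suc k}. i \<notin> S \<longrightarrow> 2^i * f (insert i S) \<le> f S"
    define g where "g S = f (insert (Suc k) S)" for S
    have IHf: "f {} / 2^k \<le> (\<Sum>S\<in>Pow {1..k}. (-1)^card S * f S) \<and>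
     (\<Sum>S\<in>Pow {1..k}. (-1)^card S * f S) \<le> f {}"
    proof -
      have sub: "{1..k} \<subseteq> {1..Suc k}" by auto
      have "\<forall>S\<subseteq>{1..k}. 0 \<le> f S" using nn sub by (meson subset_trans)
      moreover have "\<forall>S\<subseteq>{1..k}. \<forall>i\<in>{1..k}. i \<notin> S \<longrightarrow> 2^i * f (insert i S) \<le> f S"
        using st sub by (meson subset_trans subsetD)
      ultimately show ?thesis using Suc.IH by blast
    qed
    have IHg: "g {} / 2^k \<le> (\<Sum>S\<in>Pow {1..k}. (-1)^card S * g S) \<and>
     (\<Sum>S\<in>Pow {1..k}. (-1)^card S * g S) \<le> g {}"
    proof -
      have "\<forall>S\<subseteq>{1..k}. 0 \<le> g S"
      proof (intro allI impI)
        fix S assume "S \<subseteq> {1..k}"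
        then have "insert (Suc k) S \<subseteq> {1..Suc k}" by auto
        then show "0 \<le> g S" using nn unfolding g_def by blast
      qed
      moreover have "\<forall>S\<subseteq>{1..k}. \<forall>i\<in>{1..k}. i \<notin> S \<longrightarrow> 2^i * g (insert i S) \<le> g S"
      proof (intro allI impI ballI)
        fix S i assume "S \<subseteq> {1..k}" "i \<in> {1..k}" "i \<notin> S"
        then have h: "insert (Suc k) S \<subseteq> {1..Suc k}" "i \<in> {1..Suc k}" "i \<notin> insert (Suc k) S" by auto
        have "2^i * f (insert i (insert (Suc k) S)) \<le> f (insert (Suc k) S)"
          using st h by blast
        then show "2^i * g (insert i S) \<le> g S" unfolding g_def by (simp add: insert_commute)
      qed
      ultimately show ?thesis using Suc.IH by blast
    qed
    have dec: "Pow {1..Suc k} = Pow {1..k} \<union> insert (Suc k) ` Pow {1..k}"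
      by (simp add: atLeastAtMostSuc_conv Pow_insert)
    have disj: "Pow {1..k} \<inter> insert (Suc k) ` Pow {1..k} = {}" by auto
    have inj: "inj_on (insert (Suc k)) (Pow {1..k})"
    proof (rule inj_onI)
      fix S T assume ST: "S \<in> Pow {1..k}" "T \<in> Pow {1..k}" "insert (Suc k) S = insert (Suc k) T"
      then have "Suc k \<notin> S" "Suc k \<notin> T" by auto
      then show "S = T" using ST(3) by (metis Diff_insert_absorb)
    qed
    have "(\<Sum>S\<in>Pow {1..Suc k}. (-1)^card S * f S) =
      (\<Sum>S\<in>Pow {1..k}. (-1)^card S * f S) + (\<Sum>S\<in>insert (Suc k) ` Pow {1..k}. (-1)^card S * f S)"
      unfolding dec by (rule sum.union_disjoint) (use disj in auto)
    also have "(\<Sum>S\<in>insert (Suc k) ` Pow {1..k}. (-1)^card S * f S) =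
       (\<Sum>S\<in>Pow {1..k}. (-1)^card (insert (Suc k) S) * f (insert (Suc k) S))"
      by (rule sum.reindex[OF inj, unfolded comp_def])
    also have "\<dots> = - (\<Sum>S\<in>Pow {1..k}. (-1)^card S * g S)"
      unfolding g_def sum_negf[symmetric]
    proof (rule sum.cong[OF refl])
      fix S assume "S \<in> Pow {1..k}"
      then have "Suc k \<notin> S" "finite S" by (auto intro: finite_subset)
      then show "(-1)^card (insert (Suc k) S) * f (insert (Suc k) S) = - ((-1)^card S * f (insert (Suc k) S))"
        by simp
    qed
    finally have eq: "(\<Sum>S\<in>Pow {1..Suc k}. (-1)^card S * f S) =
       (\<Sum>S\<in>Pow {1..k}. (-1)^card S * f S) - (\<Sum>S\<in>Pow {1..k}. (-1)^card S * g S)" by simp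
    have g0: "0 \<le> g {}"
    proof -
      have "{Suc k} \<subseteq> {1..Suc k}" by auto
      then show ?thesis unfolding g_def using nn by blast
    qed
    have gle: "2^Suc k * g {} \<le> f {}"
    proof -
      have "{} \<subseteq> {1..Suc k}" "Suc k \<in> {1..Suc k}" "Suc k \<notin> {}" by auto
      then have "2^Suc k * f (insert (Suc k) {}) \<le> f {}" using st by blast
      then show ?thesis unfolding g_def .
    qed
    show "f {} / 2^Suc k \<le> (\<Sum>S\<in>Pow {1..Suc k}. (-1)^card S * f S) \<and>
     (\<Sum>S\<in>Pow {1..Suc k}. (-1)^card S * f S) \<le> f {}"
    proof
      have "g {} \<le> f {} / 2^Suc k" using gle by (simp add: pos_le_divide_eq mult.commute)
      moreover have "f {} / 2^k = 2 * (f {} / 2^Suc k)" by simp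
      ultimately show "f {} / 2^Suc k \<le> (\<Sum>S\<in>Pow {1..Suc k}. (-1)^card S * f S)"
        unfolding eq using IHf IHg by linarith
      have "0 \<le> g {} / 2^k" using g0 by simp
      then show "(\<Sum>S\<in>Pow {1..Suc k}. (-1)^card S * f S) \<le> f {}"
        unfolding eq using IHf IHg by linarith
    qed
  qed
qed

lemma abstract_final:
  fixes f :: "nat set \<Rightarrow> real"
  assumes ge1: "\<And>S. S \<subseteq> {1..k} \<Longrightarrow> 1 \<le> f S"
    and st: "\<And>S i. S \<subseteq> {1..k} \<Longrightarrow> i \<in> {1..k} \<Longrightarrow> i \<notin> S \<Longrightarrow> 2^i * f (insert i S) \<le> f S"
  shows "(2::real)^k / 2 \<le> (\<Sum>S\<in>Pow {1..k}. (-1)^card S * f S)"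
proof -
  have nn: "\<forall>S\<subseteq>{1..k}. 0 \<le> f S" using ge1 by (meson dual_order.trans zero_le_one)
  have lb: "f {} / 2^k \<le> (\<Sum>S\<in>Pow {1..k}. (-1)^card S * f S)"
    using abstract_bound[of k] nn st by blast
  have "(2::real)^k / 2 \<le> f {} / 2^k"
  proof (cases "k = 0")
    case True then show ?thesis using ge1[of "{}"] by simp
  next
    case False
    have a: "2^k * f {k} \<le> f {}" using st[of "{}" k] False by simp
    show ?thesis
    proof (cases "k = 1")
      case True
      then show ?thesis using a ge1[of "{1}"] by simp
    next
      case False
      with \<open>k \<noteq> 0\<close> have k2: "k \<ge> 2" by simp
      have b: "2^(k-1) * f {k-1, k} \<le> f {k}" using st[of "{k}" "k-1"] k2 by (simp add: insert_commute)
      have c: "1 \<le> f {k-1,k}" using ge1[of "{k-1,k}"] k2 by simp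
      have "(2::real)^(k-1) * 1 \<le> 2^(k-1) * f {k-1,k}" using c by (intro mult_left_mono) auto
      then have d: "(2::real)^(k-1) \<le> f {k}" using b by linarith
      have "(2::real)^k * 2^(k-1) \<le> 2^k * f {k}" using d by (intro mult_left_mono) auto
      then have "(2::real)^k * 2^(k-1) \<le> f {}" using a by linarith
      moreover have "(2::real)^k = 2 * 2^(k-1)"
      proof -
        obtain m where "k = Suc m" using k2 by (cases k) auto
        then show ?thesis by simp
      qed
      ultimately have "(2::real)^(k-1) * 2^k \<le> f {}" by (simp add: mult.commute)
      then have "(2::real)^(k-1) \<le> f {} / 2^k" by (simp add: pos_le_divide_eq)
      then show ?thesis using \<open>(2::real)^k = 2 * 2^(k-1)\<close> by simp
    qed
  qed
  then show ?thesis using lb by linarith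
qed



lemma boolean_psi:
  fixes G :: "('a, 'b) monoid_scheme" and H :: "'a set" and l :: nat and A :: "nat \<Rightarrow> 'a set"
  assumes "group G" and "finite (carrier G)" and "subgroup H G"
    and "boolean_rank (overgroups G H) l"
    and "bij_betw A {1..l} (atoms G H)"
    and "\<And>i. i \<in> {1..l} \<Longrightarrow> rel_index G (A i) H \<ge> 2 ^ i"
  shows "\<exists>\<psi>. bij_betw \<psi> (overgroups G H) (Pow {1..l}) \<and>
      (\<forall>K\<in>overgroups G H. \<forall>L\<in>overgroups G H. K \<subseteq> L \<longleftrightarrow> \<psi> K \<subseteq> \<psi> L) \<and>
      (\<forall>i\<in>{1..l}. \<psi> (A i) = {i} \<and> A i \<in> overgroups G H) \<and> \<psi> H = {}"
proof -
  define P where "P = overgroups G H"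
  obtain \<phi> where \<phi>bij: "bij_betw \<phi> P (Pow {..<l})"
    and \<phi>ord: "\<forall>K\<in>P. \<forall>L\<in>P. K \<subseteq> L \<longleftrightarrow> \<phi> K \<subseteq> \<phi> L"
    using assms(4) unfolding boolean_rank_def P_def by blast
  have HP: "H \<in> P" using assms(3) unfolding P_def overgroups_def by auto
  have Hbot: "\<And>K. K \<in> P \<Longrightarrow> H \<subseteq> K" unfolding P_def overgroups_def by auto
  have \<phi>inj: "\<And>K L. K \<in> P \<Longrightarrow> L \<in> P \<Longrightarrow> \<phi> K = \<phi> L \<Longrightarrow> K = L"
    using \<phi>bij unfolding bij_betw_def inj_on_def by blast
  have \<phi>surj: "\<exists>K\<in>P. \<phi> K = S" if "S \<subseteq> {..<l}" for S
  proof -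
    have "S \<in> \<phi> ` P" using that \<phi>bij unfolding bij_betw_def by simp
    then show ?thesis by (metis imageE)
  qed
  have \<phi>into: "\<And>K. K \<in> P \<Longrightarrow> \<phi> K \<subseteq> {..<l}"
    using \<phi>bij unfolding bij_betw_def by auto
  have \<phi>H: "\<phi> H = {}"
  proof -
    obtain K0 where "K0 \<in> P" "\<phi> K0 = {}" using \<phi>surj[of "{}"] by auto
    then show ?thesis using \<phi>ord HP Hbot by blast
  qed
  have Aat: "\<And>i. i \<in> {1..l} \<Longrightarrow> A i \<in> atoms G H"
    using assms(5) unfolding bij_betw_def by auto
  have AP: "\<And>i. i \<in> {1..l} \<Longrightarrow> A i \<in> P \<and> A i \<noteq> H \<and> (\<forall>B\<in>P - {H}. B \<subseteq> A i \<longrightarrow> B = A i)"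
    using Aat unfolding atoms_def P_def by auto
  have sing: "\<exists>x. \<phi> (A i) = {x}" if i: "i \<in> {1..l}" for i
  proof -
    have "\<phi> (A i) \<noteq> {}" using AP[OF i] \<phi>inj HP \<phi>H by metis
    then obtain x where x: "x \<in> \<phi> (A i)" by blast
    then have "{x} \<subseteq> {..<l}" using \<phi>into AP[OF i] by blast
    then obtain B where B: "B \<in> P" "\<phi> B = {x}" using \<phi>surj by blast
    have "B \<subseteq> A i" using \<phi>ord B AP[OF i] x by auto
    moreover have "B \<noteq> H" using B \<phi>H by auto
    ultimately have "B = A i" using AP[OF i] B by blast
    then show ?thesis using B by blast
  qed
  then obtain \<sigma> where \<sigma>: "\<And>i. i \<in> {1..l} \<Longrightarrow> \<phi> (A i) = {\<sigma> i}" by metis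
  have \<sigma>inj: "inj_on \<sigma> {1..l}"
  proof (rule inj_onI)
    fix i j assume ij: "i \<in> {1..l}" "j \<in> {1..l}" "\<sigma> i = \<sigma> j"
    then have "A i = A j" using \<sigma> \<phi>inj AP by metis
    then show "i = j" using assms(5) ij unfolding bij_betw_def inj_on_def by blast
  qed
  have \<sigma>sub: "\<sigma> ` {1..l} \<subseteq> {..<l}" using \<sigma> \<phi>into AP by fastforce
  have \<sigma>img: "\<sigma> ` {1..l} = {..<l}"
    by (rule card_subset_eq) (use \<sigma>sub card_image[OF \<sigma>inj] in auto)
  define \<psi> where "\<psi> K = {i\<in>{1..l}. \<sigma> i \<in> \<phi> K}" for K
  have \<phi>\<psi>: "\<phi> K = \<sigma> ` \<psi> K" if "K \<in> P" for K
  proof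
    show "\<phi> K \<subseteq> \<sigma> ` \<psi> K"
    proof
      fix x assume x: "x \<in> \<phi> K"
      then have "x \<in> \<sigma> ` {1..l}" using \<phi>into[OF that] \<sigma>img by blast
      then obtain i where "i \<in> {1..l}" "x = \<sigma> i" by blast
      then show "x \<in> \<sigma> ` \<psi> K" using x unfolding \<psi>_def by blast
    qed
  qed (auto simp: \<psi>_def)
  have \<psi>ord: "\<forall>K\<in>P. \<forall>L\<in>P. K \<subseteq> L \<longleftrightarrow> \<psi> K \<subseteq> \<psi> L"
  proof (intro ballI)
    fix K L assume KL: "K \<in> P" "L \<in> P"
    have "\<psi> K \<subseteq> \<psi> L \<longleftrightarrow> \<phi> K \<subseteq> \<phi> L"
    proof
      assume "\<psi> K \<subseteq> \<psi> L" then show "\<phi> K \<subseteq> \<phi> L" using \<phi>\<psi> KL by (metis image_mono)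
    next
      assume "\<phi> K \<subseteq> \<phi> L" then show "\<psi> K \<subseteq> \<psi> L" unfolding \<psi>_def by auto
    qed
    then show "K \<subseteq> L \<longleftrightarrow> \<psi> K \<subseteq> \<psi> L" using \<phi>ord KL by blast
  qed
  have \<psi>bij: "bij_betw \<psi> P (Pow {1..l})"
  proof (rule bij_betw_imageI)
    show "inj_on \<psi> P" using \<psi>ord by (intro inj_onI) blast
    show "\<psi> ` P = Pow {1..l}"
    proof
      show "\<psi> ` P \<subseteq> Pow {1..l}" unfolding \<psi>_def by auto
      show "Pow {1..l} \<subseteq> \<psi> ` P"
      proof
        fix S assume "S \<in> Pow {1..l}"
        then have S: "S \<subseteq> {1..l}" by auto
        then obtain K where K: "K \<in> P" "\<phi> K = \<sigma> ` S" using \<phi>surj \<sigma>sub by (meson image_mono order_trans)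
        have "\<psi> K = S"
        proof
          show "\<psi> K \<subseteq> S"
          proof
            fix i assume "i \<in> \<psi> K"
            then have i: "i \<in> {1..l}" "\<sigma> i \<in> \<sigma> ` S" unfolding \<psi>_def K(2) by auto
            then obtain j where j: "j \<in> S" "\<sigma> i = \<sigma> j" by blast
            then have "j \<in> {1..l}" using S by blast
            then have "i = j" using \<sigma>inj i(1) j(2) unfolding inj_on_def by blast
            then show "i \<in> S" using j by simp
          qed
          show "S \<subseteq> \<psi> K" unfolding \<psi>_def K(2) using S by auto
        qed
        then show "S \<in> \<psi> ` P" using K by blast
      qed
    qed
  qed
  have \<psi>A: "\<psi> (A i) = {i}" if "i \<in> {1..l}" for i
  proof -
    have "\<psi> (A i) = {j\<in>{1..l}. \<sigma> j = \<sigma> i}" unfolding \<psi>_def \<sigma>[OF that] by simp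
    also have "\<dots> = {i}"
    proof
      show "{j\<in>{1..l}. \<sigma> j = \<sigma> i} \<subseteq> {i}" using \<sigma>inj that unfolding inj_on_def by blast
      show "{i} \<subseteq> {j\<in>{1..l}. \<sigma> j = \<sigma> i}" using that by blast
    qed
    finally show ?thesis .
  qed
  have \<psi>H: "\<psi> H = {}" unfolding \<psi>_def \<phi>H by simp
  have "\<forall>i\<in>{1..l}. \<psi> (A i) = {i} \<and> A i \<in> P" using \<psi>A AP by blast
  then show ?thesis unfolding P_def[symmetric] using \<psi>bij \<psi>ord \<psi>H by blast
qed


lemma index_pos:
  assumes "group G" "finite (carrier G)" "subgroup K G"
  shows "rel_index G (carrier G) K * card K = card (carrier G)" "rel_index G (carrier G) K \<ge> 1" "card K > 0"
proof -
  show e: "rel_index G (carrier G) K * card K = card (carrier G)"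
    by (rule rel_index_lagrange[OF assms(1,2,3) group.subgroup_self[OF assms(1)] subgroup.subset[OF assms(3)]])
  have one: "\<one>\<^bsub>G\<^esub> \<in> carrier G" by (rule monoid.one_closed[OF group.is_monoid[OF assms(1)]])
  have pos: "card (carrier G) > 0" using one assms(2) by (auto simp: card_gt_0_iff)
  show "rel_index G (carrier G) K \<ge> 1"
  proof (rule ccontr)
    assume "\<not> 1 \<le> rel_index G (carrier G) K"
    then have "rel_index G (carrier G) K = 0" by simp
    then show False using e pos by simp
  qed
  show "card K > 0"
  proof (rule ccontr)
    assume "\<not> card K > 0"
    then have "card K = 0" by simp
    then show False using e pos by simp
  qed
qed

theorem lemma10p11:
  fixes G :: "('a, 'b) monoid_scheme" and H :: "'a set" and l :: nat and A :: "nat \<Rightarrow> 'a set"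
  assumes "group G" and "finite (carrier G)" and "subgroup H G"
    and "boolean_rank (overgroups G H) l"
    and "bij_betw A {1..l} (atoms G H)"
    and "\<And>i. i \<in> {1..l} \<Longrightarrow> rel_index G (A i) H \<ge> 2 ^ i"
  shows "real_of_int (dual_totient G H) \<ge> (2::real) ^ l / 2"
proof -
  define P where "P = overgroups G H"
  obtain \<psi> where \<psi>bij: "bij_betw \<psi> P (Pow {1..l})"
    and \<psi>ord: "\<forall>K\<in>P. \<forall>L\<in>P. K \<subseteq> L \<longleftrightarrow> \<psi> K \<subseteq> \<psi> L"
    and \<psi>A: "\<forall>i\<in>{1..l}. \<psi> (A i) = {i} \<and> A i \<in> P" and \<psi>H: "\<psi> H = {}"
    using boolean_psi[OF assms] unfolding P_def by blast
  have HP: "H \<in> P" using assms(3) unfolding P_def overgroups_def by auto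
  have Hbot: "\<And>K. K \<in> P \<Longrightarrow> H \<subseteq> K" unfolding P_def overgroups_def by auto
  have Psub: "\<And>K. K \<in> P \<Longrightarrow> subgroup K G" unfolding P_def overgroups_def by auto
  have \<psi>inj: "\<And>K L. K \<in> P \<Longrightarrow> L \<in> P \<Longrightarrow> \<psi> K = \<psi> L \<Longrightarrow> K = L"
    using \<psi>bij unfolding bij_betw_def inj_on_def by blast
  have oD: "\<And>K L. K \<in> P \<Longrightarrow> L \<in> P \<Longrightarrow> K \<subseteq> L \<Longrightarrow> \<psi> K \<subseteq> \<psi> L" using \<psi>ord by blast
  have oI: "\<And>K L. K \<in> P \<Longrightarrow> L \<in> P \<Longrightarrow> \<psi> K \<subseteq> \<psi> L \<Longrightarrow> K \<subseteq> L" using \<psi>ord by blast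
  have \<psi>into: "\<And>K. K \<in> P \<Longrightarrow> \<psi> K \<subseteq> {1..l}"
    using \<psi>bij unfolding bij_betw_def by auto
  define \<psi>i where "\<psi>i = inv_into P \<psi>"
  have \<psi>i: "\<psi>i S \<in> P \<and> \<psi> (\<psi>i S) = S" if "S \<subseteq> {1..l}" for S
  proof -
    have "S \<in> \<psi> ` P" using that \<psi>bij unfolding bij_betw_def by simp
    then show ?thesis unfolding \<psi>i_def by (simp add: inv_into_into f_inv_into_f)
  qed
  have \<psi>i\<psi>: "\<psi>i (\<psi> K) = K" if "K \<in> P" for K
    using \<psi>bij that unfolding \<psi>i_def bij_betw_def by (simp add: inv_into_f_f)
  have cardP: "card P = 2 ^ l"
    using bij_betw_same_card[OF \<psi>bij] by (simp add: card_Pow)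
  have fin\<psi>: "\<And>K. K \<in> P \<Longrightarrow> finite (\<psi> K)" using \<psi>into finite_subset by blast

  have mob: "\<forall>K\<in>P. card (\<psi> K) \<le> n \<longrightarrow> mobius_aux n P (\<subseteq>) H K = (-1) ^ card (\<psi> K)" for n
  proof (induction n)
    case 0
    show ?case
    proof (intro ballI impI)
      fix K assume K: "K \<in> P" "card (\<psi> K) \<le> 0"
      then have "\<psi> K = {}" using fin\<psi> by auto
      then have "K = H" using \<psi>inj[OF K(1) HP] \<psi>H by simp
      then show "mobius_aux 0 P (\<subseteq>) H K = (-1) ^ card (\<psi> K)" using \<psi>H by simp
    qed
  next
    case (Suc n)
    show ?case
    proof (intro ballI impI)
      fix K assume K: "K \<in> P" "card (\<psi> K) \<le> Suc n"
      show "mobius_aux (Suc n) P (\<subseteq>) H K = (-1) ^ card (\<psi> K)"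
      proof (cases "H = K")
        case True then show ?thesis using \<psi>H by simp
      next
        case False
        define Z where "Z = {z\<in>P. H \<subseteq> z \<and> z \<subseteq> K \<and> z \<noteq> K}"
        define S where "S = \<psi> K"
        have SnE: "S \<noteq> {}" using False \<psi>inj[OF K(1) HP] \<psi>H unfolding S_def by auto
        have finS: "finite S" using fin\<psi> K unfolding S_def by blast
        have eq1: "mobius_aux (Suc n) P (\<subseteq>) H K = - (\<Sum>z\<in>Z. mobius_aux n P (\<subseteq>) H z)"
          using False Hbot[OF K(1)] unfolding Z_def by simp
        have eq2: "(\<Sum>z\<in>Z. mobius_aux n P (\<subseteq>) H z) = (\<Sum>z\<in>Z. (-1) ^ card (\<psi> z))"
        proof (rule sum.cong[OF refl])
          fix z assume z: "z \<in> Z"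
          then have zP: "z \<in> P" "z \<subseteq> K" "z \<noteq> K" unfolding Z_def by auto
          then have "\<psi> z \<subset> \<psi> K" using oD[OF zP(1) K(1)] \<psi>inj[OF zP(1) K(1)] by blast
          then have "card (\<psi> z) < card (\<psi> K)" using finS unfolding S_def by (simp add: psubset_card_mono)
          then have "card (\<psi> z) \<le> n" using K(2) by simp
          then show "mobius_aux n P (\<subseteq>) H z = (-1) ^ card (\<psi> z)" using Suc.IH zP(1) by blast
        qed
        have bz: "bij_betw \<psi> Z (Pow S - {S})"
        proof (rule bij_betw_imageI)
          show "inj_on \<psi> Z" using \<psi>inj unfolding Z_def inj_on_def by blast
          show "\<psi> ` Z = Pow S - {S}"
          proof
            show "\<psi> ` Z \<subseteq> Pow S - {S}"
            proof
              fix T assume "T \<in> \<psi> ` Z"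
              then obtain z where z: "z \<in> Z" "T = \<psi> z" by blast
              then have zP: "z \<in> P" "z \<subseteq> K" "z \<noteq> K" unfolding Z_def by auto
              then have "\<psi> z \<subseteq> \<psi> K" "\<psi> z \<noteq> \<psi> K" using oD[OF zP(1) K(1)] \<psi>inj[OF zP(1) K(1)] by blast+
              then show "T \<in> Pow S - {S}" using z unfolding S_def by blast
            qed
            show "Pow S - {S} \<subseteq> \<psi> ` Z"
            proof
              fix T assume T: "T \<in> Pow S - {S}"
              then have Tl: "T \<subseteq> {1..l}" using \<psi>into K(1) unfolding S_def by blast
              have z: "\<psi>i T \<in> P" "\<psi> (\<psi>i T) = T" using \<psi>i[OF Tl] by auto
              have "\<psi>i T \<subseteq> K" using oI[OF z(1) K(1)] z(2) T unfolding S_def by auto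
              moreover have "\<psi>i T \<noteq> K" using z T unfolding S_def by auto
              ultimately have "\<psi>i T \<in> Z" using z Hbot unfolding Z_def by blast
              then show "T \<in> \<psi> ` Z" using z by (metis image_eqI)
            qed
          qed
        qed
        have eq3: "(\<Sum>z\<in>Z. (-1::int) ^ card (\<psi> z)) = (\<Sum>T\<in>Pow S - {S}. (-1) ^ card T)"
          using sum.reindex_bij_betw[OF bz, of "\<lambda>T. (-1::int) ^ card T"] .
        have eq4: "(\<Sum>T\<in>Pow S - {S}. (-1::int) ^ card T) = (\<Sum>T\<in>Pow S. (-1) ^ card T) - (-1) ^ card S"
          using finS by (simp add: sum_diff1)
        show ?thesis using eq1 eq2 eq3 eq4 altsum_zero[OF finS SnE] unfolding S_def by simp
      qed
    qed
  qed
  have mobP: "mobius P (\<subseteq>) H K = (-1) ^ card (\<psi> K)" if "K \<in> P" for K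
  proof -
    have "card (\<psi> K) \<le> l" using card_mono[OF _ \<psi>into[OF that]] by simp
    also have "l \<le> 2 ^ l" by (simp add: less_imp_le)
    finally show ?thesis unfolding mobius_def cardP using mob that by blast
  qed
  define idx where "idx K = rel_index G (carrier G) K" for K
  define f where "f S = real (idx (\<psi>i S))" for S
  have "dual_totient G H = (\<Sum>K\<in>P. (-1) ^ card (\<psi> K) * int (idx K))"
    unfolding dual_totient_def P_def[symmetric] idx_def using mobP by simp
  also have "\<dots> = (\<Sum>S\<in>Pow {1..l}. (-1) ^ card S * int (idx (\<psi>i S)))"
  proof -
    have "(\<Sum>K\<in>P. (-1) ^ card (\<psi> K) * int (idx (\<psi>i (\<psi> K)))) = (\<Sum>S\<in>Pow {1..l}. (-1) ^ card S * int (idx (\<psi>i S)))"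
      using sum.reindex_bij_betw[OF \<psi>bij, of "\<lambda>S. (-1) ^ card S * int (idx (\<psi>i S))"] .
    then show ?thesis using \<psi>i\<psi> by simp
  qed
  finally have dt: "real_of_int (dual_totient G H) = (\<Sum>S\<in>Pow {1..l}. (-1) ^ card S * f S)"
    unfolding f_def by simp
  have ge1: "1 \<le> f S" if "S \<subseteq> {1..l}" for S
    using index_pos(2)[OF assms(1,2) Psub[OF conjunct1[OF \<psi>i[OF that]]]] unfolding f_def idx_def by simp
  have st: "2^i * f (insert i S) \<le> f S" if S: "S \<subseteq> {1..l}" and i: "i \<in> {1..l}" "i \<notin> S" for S i
  proof -
    define K where "K = \<psi>i S"
    define L where "L = \<psi>i (insert i S)"
    have iS: "insert i S \<subseteq> {1..l}" using S i by auto
    have KP: "K \<in> P" "\<psi> K = S" using \<psi>i[OF S] unfolding K_def by auto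
    have LP: "L \<in> P" "\<psi> L = insert i S" using \<psi>i[OF iS] unfolding L_def by auto
    have AiP: "A i \<in> P" "\<psi> (A i) = {i}" using \<psi>A i by auto
    have AL: "A i \<subseteq> L" using oI[OF AiP(1) LP(1)] AiP(2) LP(2) by auto
    have KL: "K \<subseteq> L" using oI[OF KP(1) LP(1)] KP(2) LP(2) by auto
    have sAK: "subgroup (A i \<inter> K) G"
      using group.subgroups_Inter_pair[OF assms(1) Psub[OF AiP(1)] Psub[OF KP(1)]] .
    have AKP: "A i \<inter> K \<in> P" using sAK Hbot AiP(1) KP(1) unfolding P_def overgroups_def by auto
    have "\<psi> (A i \<inter> K) \<subseteq> \<psi> (A i)" "\<psi> (A i \<inter> K) \<subseteq> \<psi> K"
      using oD[OF AKP AiP(1)] oD[OF AKP KP(1)] by blast+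
    then have "\<psi> (A i \<inter> K) = \<psi> H" using AiP(2) KP(2) i(2) \<psi>H by auto
    then have AK: "A i \<inter> K = H" using \<psi>inj[OF AKP HP] by blast
    have m: "rel_index G (A i) H \<le> rel_index G L K"
      using rel_index_mono[OF assms(1,2) Psub[OF AiP(1)] Psub[OF KP(1)] Psub[OF LP(1)] AL KL AK] .
    have "2^i \<le> rel_index G L K" using assms(6)[OF i(1)] m by linarith
    then have ineq: "2^i * idx L \<le> rel_index G L K * idx L" by simp
    have e1: "idx K * card K = card (carrier G)" using index_pos(1)[OF assms(1,2) Psub[OF KP(1)]] unfolding idx_def .
    have e2: "idx L * card L = card (carrier G)" using index_pos(1)[OF assms(1,2) Psub[OF LP(1)]] unfolding idx_def .
    have e3: "rel_index G L K * card K = card L"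
      using rel_index_lagrange[OF assms(1,2) Psub[OF KP(1)] Psub[OF LP(1)] KL] .
    have "idx K * card K = (rel_index G L K * idx L) * card K" using e1 e2 e3 by (metis mult.assoc mult.commute)
    then have "idx K = rel_index G L K * idx L" using index_pos(3)[OF assms(1,2) Psub[OF KP(1)]] by simp
    then have "2^i * idx L \<le> idx K" using ineq by simp
    then have "real (2^i * idx L) \<le> real (idx K)" by (simp only: of_nat_le_iff)
    then show ?thesis unfolding f_def K_def[symmetric] L_def[symmetric] by simp
  qed
  show ?thesis unfolding dt using abstract_final[of l f] ge1 st by blast
qed

end
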